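(* Let $\alpha\neq\beta$ with $\alpha\neq0$, and let $(g_n)$ be as in the context. Then, as formal power series in $T$, $$\sum_{n\ge0}g_n(\alpha)\,T^n=\frac{1+T(\alpha-\beta)-\sqrt{1-2T(\alpha+\beta)+T^2(\alpha-\beta)^2}}{2T\alpha},$$ where the square root denotes the formal power series with constant term $1$.
   Context: Fix complex numbers $\alpha\neq\beta$. Define polynomials $g_n(x)\in\mathbb{C}[x]$ recursively by $g_0(x)=1$ and, for $n\ge1$, $$(x-\alpha)(\alpha-\beta)^{n-1}g_n(x)=\alpha(x-\beta)^n g_{n-1}(\alpha)-x(\alpha-\beta)^n g_{n-1}(x).$$ (The right-hand side vanishes at $x=\alpha$, so it is divisible by $x-\alpha$ and $g_n$ is a uniquely determined polynomial.) *)

theory Defs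
  imports Complex_Main "HOL-Computational_Algebra.Polynomial" "HOL-Computational_Algebra.Formal_Power_Series"
begin

text \<open>The recursion
  (x-a)(a-b)^(n-1) g_n(x) = a (x-b)^n g_(n-1)(a) - x (a-b)^n g_(n-1)(x)
  is rendered by exact polynomial division (the right-hand side is divisible).\<close>
fun g :: "complex \<Rightarrow> complex \<Rightarrow> nat \<Rightarrow> complex poly" where
  "g a b 0 = 1"
| "g a b (Suc n) =
     (smult (a * poly (g a b n) a) ([:-b, 1:] ^ Suc n)
        - smult ((a - b) ^ Suc n) ([:0, 1:] * g a b n))
     div ([:-a, 1:] * [:(a - b) ^ n:])"

definition fps_sqrt1 :: "complex fps \<Rightarrow> complex fps" where
  "fps_sqrt1 D = fps_radical (\<lambda>_ _. 1) 2 D"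

end

theory Submission
  imports Defs
begin
unbundle fps_syntax

definition ev :: "complex fps \<Rightarrow> complex poly \<Rightarrow> complex fps" where
  "ev x p = poly (map_poly fps_const p) x"

lemma fps_const_sum': "fps_const (sum f A) = (\<Sum>i\<in>A. fps_const (f i))"
  by (induction A rule: infinite_finite_induct) (auto simp flip: fps_const_add)

lemma mp_add: "map_poly fps_const (p + q) = map_poly fps_const p + map_poly fps_const (q::complex poly)"
  by (rule poly_eqI) (simp add: coeff_map_poly)

lemma mp_minus: "map_poly fps_const (p - q) = map_poly fps_const p - map_poly fps_const (q::complex poly)"
  by (rule poly_eqI) (simp add: coeff_map_poly)

lemma mp_mult: "map_poly fps_const (p * q) = map_poly fps_const p * map_poly fps_const (q::complex poly)"
  by (rule poly_eqI) (simp add: coeff_map_poly coeff_mult fps_const_sum')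

lemma ev_add: "ev x (p + q) = ev x p + ev x q"
  by (simp add: ev_def mp_add)
lemma ev_minus: "ev x (p - q) = ev x p - ev x q"
  by (simp add: ev_def mp_minus)
lemma ev_mult: "ev x (p * q) = ev x p * ev x q"
  by (simp add: ev_def mp_mult)
lemma ev_power: "ev x (p ^ n) = ev x p ^ n"
  by (induction n) (simp_all add: ev_mult[unfolded ev_def] ev_def)
lemma ev_const: "ev x [:c:] = fps_const c"
  by (simp add: ev_def map_poly_pCons)
lemma ev_lin: "ev x [:c, 1:] = fps_const c + x"
  by (simp add: ev_def map_poly_pCons)
lemma ev_smult: "ev x (smult c p) = fps_const c * ev x p"
  by (metis ev_const ev_mult mult_smult_left mult_1 smult_one)

lemma g_rec:
  fixes a b :: complex
  assumes "a \<noteq> b"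
  shows "g a b (Suc n) * ([:-a,1:] * [:(a-b)^n:]) =
     smult (a * poly (g a b n) a) ([:-b, 1:] ^ Suc n) - smult ((a - b) ^ Suc n) ([:0, 1:] * g a b n)"
proof -
  define P where "P = smult (a * poly (g a b n) a) ([:-b, 1:] ^ Suc n) - smult ((a - b) ^ Suc n) ([:0, 1:] * g a b n)"
  have "poly P a = 0" by (simp add: P_def algebra_simps)
  then obtain q where q: "P = [:-a,1:] * q" using poly_eq_0_iff_dvd by blast
  have k: "(a-b)^n \<noteq> 0" using assms by simp
  have kq: "[:(a-b)^n:] * smult (1/(a-b)^n) q = q" using k assms by simp
  have "P = ([:-a,1:] * [:(a-b)^n:]) * smult (1/(a-b)^n) q"
    by (simp only: q kq mult.assoc)
  then have "([:-a,1:] * [:(a-b)^n:]) dvd P" by (rule dvdI)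
  then have "P div ([:-a,1:] * [:(a-b)^n:]) * ([:-a,1:] * [:(a-b)^n:]) = P"
    by (rule dvd_div_mult_self)
  then show ?thesis by (simp add: P_def)
qed

lemma main_C:
  fixes a b :: complex
  assumes ab: "a \<noteq> b" and a0: "a \<noteq> 0"
  defines "C \<equiv> Abs_fps (\<lambda>n. poly (g a b n) a)"
  shows "fps_X * fps_const a * C^2 - (1 + fps_X * fps_const (a-b)) * C + 1 = 0"
proof -
  define d where "d = a - b"
  have d0: "d \<noteq> 0" using ab by (simp add: d_def)
  define T :: "complex fps" where "T = fps_X"
  define A where "A = 1 + fps_const d * T"
  define iA where "iA = inverse A"
  define B where "B = 1 - fps_const b * T"
  define Xk where "Xk = fps_const a * iA"
  define V where "V = B * iA"
  define s where "s = T * V"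
  define E where "E n = ev Xk (g a b n)" for n
  define c where "c n = poly (g a b n) a" for n
  have AiA: "A * iA = 1" unfolding iA_def by (rule inverse_mult_eq_1') (simp add: A_def T_def)
  have Xka: "Xk - fps_const a = - fps_const d * T * Xk"
  proof -
    have "Xk - fps_const a = Xk - fps_const a * (A * iA)" by (simp add: AiA)
    also have "\<dots> = - fps_const d * T * Xk" by (simp add: Xk_def A_def algebra_simps) (metis fps_const_neg mult_minus_right)
    finally show ?thesis .
  qed
  have Xkb: "Xk - fps_const b = fps_const d * V"
  proof -
    have "Xk - fps_const b = Xk - fps_const b * (A * iA)" by (simp add: AiA)
    also have "\<dots> = fps_const d * V" apply (simp add: Xk_def A_def V_def B_def d_def algebra_simps) 
      apply (simp flip: distrib_left fps_const_add) 
      by simp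
    finally show ?thesis .
  qed
  have step: "Xk * E n - T * Xk * E (Suc n) = fps_const (a * c n) * V ^ Suc n" for n
  proof -
    have "ev Xk (g a b (Suc n) * ([:-a,1:] * [:(a-b)^n:])) =
     ev Xk (smult (a * poly (g a b n) a) ([:-b, 1:] ^ Suc n) - smult ((a - b) ^ Suc n) ([:0, 1:] * g a b n))"
      using g_rec[OF ab, of n] by (rule arg_cong)
    then have "E (Suc n) * ((fps_const (-a) + Xk) * fps_const ((a-b)^n)) =
       fps_const (a * c n) * (fps_const (-b) + Xk) ^ Suc n - fps_const ((a-b) ^ Suc n) * ((fps_const 0 + Xk) * E n)"
      unfolding ev_mult ev_minus ev_smult ev_power ev_const ev_lin E_def c_def .
    then have "E (Suc n) * ((Xk - fps_const a) * fps_const (d^n)) =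
       fps_const (a * c n) * (Xk - fps_const b) ^ Suc n - fps_const (d ^ Suc n) * (Xk * E n)"
      by (simp add: d_def add.commute del: fps_const_neg flip: fps_const_neg)
    then have "E (Suc n) * ((- fps_const d * T * Xk) * fps_const (d^n)) =
       fps_const (a * c n) * (fps_const d * V) ^ Suc n - fps_const (d ^ Suc n) * (Xk * E n)"
      by (simp only: Xka Xkb)
    then have "fps_const (d ^ Suc n) * (Xk * E n - T * Xk * E (Suc n) - fps_const (a * c n) * V ^ Suc n) = 0"
      by (simp add: algebra_simps power_mult_distrib del: fps_const_neg flip: fps_const_power fps_const_mult)
    moreover have "fps_const (d ^ Suc n) \<noteq> 0" using d0 by simp
    ultimately show ?thesis by simp
  qed
  have E0: "E 0 = 1" by (simp add: E_def ev_def)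
  have tele: "Xk - T^N * (Xk * E N) = fps_const a * V * (\<Sum>n<N. fps_const (c n) * s^n)" for N
  proof -
    have "Xk * (T^n * E n) - Xk * (T^Suc n * E (Suc n)) = fps_const a * V * (fps_const (c n) * s^n)" for n
    proof -
      have "T^n * (Xk * E n - T * Xk * E (Suc n)) = T^n * (fps_const (a * c n) * V ^ Suc n)" using step by simp
      then show ?thesis by (simp add: s_def power_mult_distrib algebra_simps)
    qed
    then have "(\<Sum>n<N. Xk * (T^n * E n) - Xk * (T^Suc n * E (Suc n))) = (\<Sum>n<N. fps_const a * V * (fps_const (c n) * s^n))" by simp
    then show ?thesis using sum_lessThan_telescope'[of "\<lambda>n. Xk * (T^n * E n)" N]
      by (simp add: sum_distrib_left E0 algebra_simps)
  qed
  have s0: "s $ 0 = 0" by (simp add: s_def T_def)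
  have Ps: "(\<Sum>n<N. fps_const (c n) * s^n) $ j = (C oo s) $ j" if "j < N" for j N
  proof -
    have "(\<Sum>n<N. fps_const (c n) * s^n) $ j = (\<Sum>n<N. c n * (s^n $ j))" by (simp add: fps_sum_nth)
    also have "\<dots> = (\<Sum>n\<in>{0..j}. c n * (s^n $ j))"
      apply (rule sum.mono_neutral_right) using that startsby_zero_power_prefix[OF s0] by auto
    also have "\<dots> = (C oo s) $ j" by (simp add: fps_compose_nth C_def c_def)
    finally show ?thesis .
  qed
  have XkC: "Xk = fps_const a * V * (C oo s)"
  proof (rule fps_ext)
    fix m
    have "(T^Suc m * (Xk * E (Suc m))) $ m = 0" unfolding T_def fps_X_power_mult_nth by simp
    then have "Xk $ m = (Xk - T^Suc m * (Xk * E (Suc m))) $ m" by simp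
    also have "\<dots> = (fps_const a * V * (\<Sum>n<Suc m. fps_const (c n) * s^n)) $ m" by (simp only: tele)
    also have "\<dots> = (fps_const a * V * (C oo s)) $ m" unfolding fps_mult_nth
      by (intro sum.cong refl, subst Ps) auto
    finally show "Xk $ m = (fps_const a * V * (C oo s)) $ m" .
  qed
  define Cs where "Cs = C oo s"
  have BC: "B * Cs = 1"
  proof -
    have "A * Xk = A * (fps_const a * V * Cs)" using XkC by (simp add: Cs_def)
    then have "fps_const a * (A * iA) = fps_const a * (B * Cs) * (A * iA)"
      by (simp add: Xk_def V_def algebra_simps)
    then have "fps_const a * 1 = fps_const a * (B * Cs)" by (simp add: AiA)
    moreover have "fps_const a \<noteq> 0" using a0 by simp
    ultimately show ?thesis by (metis mult_left_cancel)
  qed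
  define Q where "Q = fps_X * fps_const a * C^2 - (1 + fps_X * fps_const (a-b)) * C + 1"
  have Qs: "Q oo s = s * fps_const a * Cs^2 - (1 + s * fps_const d) * Cs + 1"
    unfolding Q_def Cs_def d_def
    by (simp add: fps_compose_add_distrib fps_compose_sub_distrib fps_compose_mult_distrib[OF s0]
        fps_compose_power[OF s0, symmetric] s0)
  have "A * B * (Q oo s) = T * fps_const a * (A * iA) * (B * Cs)^2 - (A * (B * Cs) + T * B * fps_const d * (A * iA) * (B * Cs)) + A * B"
    unfolding Qs unfolding s_def V_def by algebra
  also have "\<dots> = 0" unfolding AiA BC unfolding A_def B_def d_def
    by (simp add: algebra_simps flip: fps_const_sub)
  finally have "A * B * (Q oo s) = 0" .
  moreover have "A \<noteq> 0" "B \<noteq> 0"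
    using AiA BC by auto
  ultimately have Qs0: "Q oo s = 0" by simp
  have iA0: "iA $ 0 = 1"
  proof -
    have "(A * iA) $ 0 = 1" by (simp add: AiA)
    then show ?thesis by (simp add: A_def T_def)
  qed
  have s1: "s $ 1 = 1" by (simp add: s_def T_def V_def B_def iA0)
  have "Q = Q oo (s oo fps_inv s)" using fps_inv_right[of s] s0 s1 by simp
  also have "\<dots> = (Q oo s) oo fps_inv s"
    by (rule fps_compose_assoc) (simp_all add: fps_inv_def s0)
  also have "\<dots> = 0" by (simp add: Qs0)
  finally show ?thesis by (simp add: Q_def)
qed

theorem mainTheorem2:
  fixes \<alpha> \<beta> :: complex
  assumes "\<alpha> \<noteq> \<beta>" and "\<alpha> \<noteq> 0"
  shows "Abs_fps (\<lambda>n. poly (g \<alpha> \<beta> n) \<alpha>) =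
    (1 + fps_X * fps_const (\<alpha> - \<beta>)
       - fps_sqrt1 (1 - fps_const (2 * (\<alpha> + \<beta>)) * fps_X + fps_const ((\<alpha> - \<beta>) ^ 2) * fps_X ^ 2))
    / (fps_const (2 * \<alpha>) * fps_X)"
proof -
  define C where "C = Abs_fps (\<lambda>n. poly (g \<alpha> \<beta> n) \<alpha>)"
  define D where "D = 1 - fps_const (2 * (\<alpha> + \<beta>)) * fps_X + fps_const ((\<alpha> - \<beta>) ^ 2) * (fps_X::complex fps) ^ 2"
  define S where "S = 1 + fps_X * fps_const (\<alpha> - \<beta>) - fps_const (2 * \<alpha>) * fps_X * C"
  have Q: "fps_X * fps_const \<alpha> * C^2 - (1 + fps_X * fps_const (\<alpha>-\<beta>)) * C + 1 = 0"
    using main_C[OF assms] by (simp add: C_def)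
  have S2: "S^2 = D"
  proof -
    have e1: "fps_const (2*\<alpha>) = 2 * fps_const \<alpha>"
      by (metis fps_const_mult fps_numeral_fps_const numeral_One)
    have e2: "fps_const (2*(\<alpha>+\<beta>)) = 2 * (fps_const \<alpha> + fps_const \<beta>)"
      by (metis fps_const_add fps_const_mult fps_numeral_fps_const)
    have e3: "fps_const ((\<alpha>-\<beta>)^2) = (fps_const \<alpha> - fps_const \<beta>)^2" by simp
    have e4: "fps_const (\<alpha>-\<beta>) = fps_const \<alpha> - fps_const \<beta>" by simp
    have "S^2 - D = 4 * fps_const \<alpha> * fps_X * (fps_X * fps_const \<alpha> * C^2 - (1 + fps_X * fps_const (\<alpha>-\<beta>)) * C + 1)"
      unfolding S_def D_def e1 e2 e3 e4 by algebra
    then show ?thesis by (simp add: Q)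
  qed
  have D0: "D $ 0 = 1" by (simp add: D_def)
  have S0: "S $ 0 = 1" by (simp add: S_def)
  have S2': "S ^ Suc 1 = D" using S2 by (simp add: numeral_2_eq_2)
  have "S = fps_radical (\<lambda>_ _. 1) (Suc 1) D"
    using radical_unique[of "\<lambda>_ _. 1" 1 D S] S2' D0 S0 by simp
  then have "S = fps_sqrt1 D"
    unfolding fps_sqrt1_def by (simp add: numeral_2_eq_2)
  then have num: "1 + fps_X * fps_const (\<alpha> - \<beta>) - fps_sqrt1 D = fps_const (2 * \<alpha>) * fps_X * C"
  proof -
    assume h: "S = fps_sqrt1 D"
    have "1 + fps_X * fps_const (\<alpha> - \<beta>) - fps_sqrt1 D = 1 + fps_X * fps_const (\<alpha> - \<beta>) - S"
      by (simp only: h)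
    also have "\<dots> = fps_const (2 * \<alpha>) * fps_X * C" by (simp add: S_def)
    finally show ?thesis .
  qed
  have "fps_const (2 * \<alpha>) * fps_X \<noteq> (0 :: complex fps)" using assms by simp
  then have "(fps_const (2 * \<alpha>) * fps_X * C) / (fps_const (2 * \<alpha>) * fps_X) = C"
    by (rule nonzero_mult_div_cancel_left)
  then show ?thesis using num by (simp add: C_def D_def)
qed

end
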